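(* Let $n\geq1$, let $H$ be an irreducible subgroup of $SL(n,\mathbb{C})$ and let $u\in U_n(H)$. Then $\mathrm{Tr}(u)=0$ if $u\notin\langle \xi I_n\rangle$, and $\mathrm{Tr}(u)=n\xi^k$ if $u=\xi^kI_n$ with $k\in\mathbb{Z}/n$.
   Context: Let $\xi=e^{2\pi i/n}$; the center of $SL(n,\mathbb{C})$ is $\langle \xi I_n\rangle$. $\pi_n:SL(n,\mathbb{C})\to PSL(n,\mathbb{C})$ is the quotient map. A subgroup $H\le SL(n,\mathbb{C})$ is irreducible if no nonzero proper subspace of $\mathbb{C}^n$ is $H$-invariant. $U_n(H)=\{g\in SL(n,\mathbb{C}) : ghg^{-1}h^{-1}\in\langle\xi I_n\rangle \text{ for all } h\in H\}$, the preimage under $\pi_n$ of the centralizer of $\pi_n(H)$ in $PSL(n,\mathbb{C})$. *)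

theory Defs
  imports "HOL-Analysis.Analysis"
begin

definition xi :: "'n::finite itself \<Rightarrow> complex" where
  "xi _ = exp (2 * pi * \<i> / of_nat CARD('n))"

definition SL :: "(complex^'n^'n) set" where
  "SL = {A. det A = 1}"

definition centre_SL :: "(complex^'n::finite^'n) set" where
  "centre_SL = {mat (xi TYPE('n) ^ k) | k::nat. True}"

definition is_subgroup_SL :: "(complex^'n::finite^'n) set \<Rightarrow> bool" where
  "is_subgroup_SL H \<longleftrightarrow> H \<subseteq> SL \<and> mat 1 \<in> H \<and>
     (\<forall>A\<in>H. \<forall>B\<in>H. A ** B \<in> H) \<and> (\<forall>A\<in>H. matrix_inv A \<in> H)"

definition irreducible_SL :: "(complex^'n::finite^'n) set \<Rightarrow> bool" where
  "irreducible_SL H \<longleftrightarrow>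
     \<not> (\<exists>W. vec.subspace W \<and> W \<noteq> {0} \<and> W \<noteq> UNIV \<and> (\<forall>h\<in>H. (\<lambda>v. h *v v) ` W \<subseteq> W))"

definition U_n :: "(complex^'n::finite^'n) set \<Rightarrow> (complex^'n^'n) set" where
  "U_n H = {g \<in> SL. \<forall>h\<in>H. g ** h ** matrix_inv g ** matrix_inv h \<in> centre_SL}"

end

theory Submission imports Defs "HOL-Computational_Algebra.Fundamental_Theorem_Algebra" begin

lemma inv_props:
  fixes A :: "complex^'n^'n"
  assumes "det A \<noteq> 0"
  shows "A ** matrix_inv A = mat 1" "matrix_inv A ** A = mat 1"
proof -
  have "invertible A" using assms invertible_det_nz by blast
  then have "\<exists>A'. A ** A' = mat 1 \<and> A' ** A = mat 1" unfolding invertible_def by blast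
  then have "A ** matrix_inv A = mat 1 \<and> matrix_inv A ** A = mat 1"
    unfolding matrix_inv_def by (rule someI_ex)
  then show "A ** matrix_inv A = mat 1" "matrix_inv A ** A = mat 1" by auto
qed

lemma trace_mat_mul: "trace (mat (c::complex) ** (M::complex^'n^'n)) = c * trace M"
  by (simp add: trace_def matrix_matrix_mult_def mat_def sum_distrib_left if_distrib[of "\<lambda>x. x * _"] cong: if_cong)

lemma trace_mat: "trace (mat (c::complex) :: complex^'n^'n) = of_nat CARD('n) * c"
  by (simp add: trace_def mat_def)

lemma mat_mulv: "(mat (c::complex) :: complex^'n^'n) *v v = c *s v"
  by (simp add: vec_eq_iff matrix_vector_mult_def mat_def if_distrib[of "\<lambda>x. x * _"] cong: if_cong)

lemma mulv_scale: "(A::complex^'n^'n) *v (c *s v) = c *s (A *v v)"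
  by (simp add: vec_eq_iff matrix_vector_mult_def sum_distrib_left algebra_simps)

lemma det_mat: "det (mat (c::complex) :: complex^'n^'n) = c ^ CARD('n)"
  by (simp add: det_diagonal mat_def)

lemma eigen_exists:
  fixes A :: "complex^'n^'n"
  shows "\<exists>c v. v \<noteq> 0 \<and> A *v v = c *s v"
proof -
  define P :: "complex poly^'n^'n" where
    "P = (\<chi> i j. if i = j then [:- A$i$j, 1:] else [:- A$i$j:])"
  have eval: "poly (det P) x = det (mat x - A)" for x
    unfolding det_def by (auto simp: poly_sum poly_prod P_def mat_def intro!: sum.cong prod.cong)
  let ?S = "{p. p permutes (UNIV::'n set)}"
  have fin: "finite ?S" by (simp add: finite_permutations)
  have z: "coeff (of_int (sign p) * (\<Prod>i\<in>UNIV. P$i$p i)) CARD('n) = 0"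
    if "p \<in> ?S - {id}" for p
  proof -
    from that obtain i0 where i0: "p i0 \<noteq> i0" by (auto simp: fun_eq_iff)
    have dle: "degree (P$i$p i) \<le> (if p i = i then 1 else 0)" for i
      by (simp add: P_def)
    have "degree (\<Prod>i\<in>UNIV. P$i$p i) \<le> (\<Sum>i\<in>UNIV. degree (P$i$p i))"
      using degree_prod_sum_le[of UNIV "\<lambda>i. P$i$p i"] by (simp add: o_def)
    also have "\<dots> \<le> (\<Sum>i\<in>UNIV. (if p i = i then 1 else 0::nat))"
      by (rule sum_mono) (rule dle)
    also have "\<dots> = (\<Sum>i\<in>UNIV - {i0}. (if p i = i then 1 else 0::nat))"
      using i0 by (subst sum.remove[of _ i0]) auto
    also have "\<dots> \<le> card (UNIV - {i0::'n})"
      using sum_bounded_above[of "UNIV - {i0}" "\<lambda>i. (if p i = i then 1 else 0::nat)" 1] by auto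
    also have "\<dots> < CARD('n)" by (simp add: card_Diff_singleton)
    finally have "degree (\<Prod>i\<in>UNIV. P$i$p i) < CARD('n)" .
    moreover have "degree (of_int (sign p) * (\<Prod>i\<in>UNIV. P$i$p i)) \<le> degree (\<Prod>i\<in>UNIV. P$i$p i)"
      using degree_mult_le[of "of_int (sign p)" "\<Prod>i\<in>UNIV. P$i$p i"] by simp
    ultimately show ?thesis by (intro coeff_eq_0) simp
  qed
  have idt: "coeff (of_int (sign (id::'n\<Rightarrow>'n)) * (\<Prod>i\<in>UNIV. P$i$id i)) CARD('n) = 1"
  proof -
    have nz: "\<forall>i\<in>UNIV. P$i$i \<noteq> 0" by (simp add: P_def)
    have "degree (\<Prod>i\<in>UNIV. P$i$i) = CARD('n)"
      using degree_prod_eq_sum_degree[OF nz] by (simp add: P_def)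
    moreover have "lead_coeff (\<Prod>i\<in>UNIV. P$i$i) = 1"
      by (simp add: lead_coeff_prod P_def)
    ultimately show ?thesis by (simp add: sign_id)
  qed
  have "coeff (det P) CARD('n) = (\<Sum>p\<in>?S. coeff (of_int (sign p) * (\<Prod>i\<in>UNIV. P$i$p i)) CARD('n))"
    unfolding det_def coeff_sum ..
  also have "\<dots> = (\<Sum>p\<in>{id}. coeff (of_int (sign p) * (\<Prod>i\<in>UNIV. P$i$p i)) CARD('n))"
    using z by (intro sum.mono_neutral_right[OF fin]) (auto simp: permutes_id)
  also have "\<dots> = 1" using idt by simp
  finally have "coeff (det P) CARD('n) = 1" .
  then have "CARD('n) \<le> degree (det P)" by (intro le_degree) simp
  moreover have "0 < CARD('n)" by simp
  ultimately have "degree (det P) \<noteq> 0" by linarith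
  then have "\<not> constant (poly (det P))" by (simp add: constant_degree)
  then obtain c where "poly (det P) c = 0" using fundamental_theorem_of_algebra by blast
  then have d0: "det (matrix ((*v) (mat c - A))) = 0" by (simp add: eval matrix_of_matrix_vector_mul)
  then have "\<not> inj ((*v) (mat c - A))"
    using det_nz_iff_inj_gen[OF matrix_vector_mul_linear_gen] by blast
  then obtain x y where xy: "x \<noteq> y" "(mat c - A) *v x = (mat c - A) *v y"
    unfolding inj_def by blast
  define v where "v = x - y"
  have "v \<noteq> 0" using xy by (simp add: v_def)
  moreover have "(mat c - A) *v v = 0"
    using xy by (simp add: v_def matrix_vector_mult_diff_distrib)
  then have "A *v v = c *s v"
    by (simp add: matrix_vector_mult_diff_rdistrib mat_mulv)
  ultimately show ?thesis by blast
qed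
lemma schur:
  fixes H :: "(complex^'n::finite^'n) set" and u :: "complex^'n^'n"
  assumes irr: "irreducible_SL H" and comm: "\<forall>h\<in>H. u ** h = h ** u"
  shows "\<exists>c. u = mat c"
proof -
  obtain c v where cv: "v \<noteq> 0" "u *v v = c *s v" using eigen_exists by blast
  define W where "W = {w. u *v w = c *s w}"
  have sub: "vec.subspace W"
    unfolding vec.subspace_def W_def
    by (simp add: matrix_vector_right_distrib mulv_scale vector_add_ldistrib
        scalar_mult_eq_scaleR[symmetric] algebra_simps)
  have ne: "W \<noteq> {0}" using cv by (auto simp: W_def)
  have inv: "\<forall>h\<in>H. (\<lambda>w. h *v w) ` W \<subseteq> W"
  proof (intro ballI subsetI)
    fix h y assume h: "h \<in> H" and "y \<in> (\<lambda>w. h *v w) ` W"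
    then obtain w where w: "w \<in> W" "y = h *v w" by blast
    have "u *v (h *v w) = (u ** h) *v w" by (simp add: matrix_vector_mul_assoc)
    also have "\<dots> = h *v (u *v w)" using comm h by (simp add: matrix_vector_mul_assoc)
    also have "\<dots> = c *s (h *v w)" using w by (simp add: W_def mulv_scale)
    finally show "y \<in> W" using w by (simp add: W_def)
  qed
  have "W = UNIV" using irr sub ne inv unfolding irreducible_SL_def by blast
  then have "\<forall>x. u *v x = mat c *v x" by (auto simp: W_def mat_mulv)
  then show ?thesis using matrix_eq by blast
qed
lemma scalar_central:
  assumes "det (mat c :: complex^'n::finite^'n) = 1"
  shows "(mat c :: complex^'n^'n) \<in> centre_SL"
proof -
  have "c ^ CARD('n) = 1" using assms by (simp add: det_mat)
  moreover have "1 \<le> CARD('n)" by (simp add: Suc_leI)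
  ultimately obtain j where j: "c = exp(2 * of_real pi * \<i> * of_nat j / of_nat CARD('n))"
    using complex_roots_unity[of "CARD('n)"] by blast
  have "c = exp (of_nat j * (2 * pi * \<i> / of_nat CARD('n)))"
    using j by (simp add: field_simps)
  also have "\<dots> = xi TYPE('n) ^ j" by (simp only: xi_def exp_of_nat_mult)
  finally show ?thesis unfolding centre_SL_def by blast
qed

theorem mainTheorem3:
  fixes H :: "(complex^'n::finite^'n) set" and u :: "complex^'n^'n"
  assumes "is_subgroup_SL H" and "irreducible_SL H" and "u \<in> U_n H"
  shows "(u \<notin> centre_SL \<longrightarrow> trace u = 0) \<and>
         (\<forall>k::nat. u = mat (xi TYPE('n) ^ k) \<longrightarrow> trace u = of_nat CARD('n) * xi TYPE('n) ^ k)"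
proof (intro conjI impI allI)
  fix k :: nat assume "u = mat (xi TYPE('n) ^ k)"
  then show "trace u = of_nat CARD('n) * xi TYPE('n) ^ k" by (simp add: trace_mat)
next
  assume nc: "u \<notin> centre_SL"
  have du: "det u = 1" and com: "\<forall>h\<in>H. u ** h ** matrix_inv u ** matrix_inv h \<in> centre_SL"
    using assms(3) by (auto simp: U_n_def SL_def)
  have HSL: "\<And>h. h \<in> H \<Longrightarrow> det h = 1" using assms(1) by (auto simp: is_subgroup_SL_def SL_def)
  have "\<exists>h\<in>H. u ** h \<noteq> h ** u"
  proof (rule ccontr)
    assume "\<not> ?thesis"
    then obtain c where "u = mat c" using schur[OF assms(2)] by blast
    with du nc scalar_central show False by blast
  qed
  then obtain h where h: "h \<in> H" "u ** h \<noteq> h ** u" by blast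
  obtain k where k: "u ** h ** matrix_inv u ** matrix_inv h = mat (xi TYPE('n) ^ k)"
    using com h(1) unfolding centre_SL_def by blast
  define c where "c = xi TYPE('n) ^ k"
  have dh: "det h = 1" using HSL h(1) .
  have e1: "matrix_inv h ** h = mat 1" "h ** matrix_inv h = mat 1"
    using inv_props[of h] dh by auto
  have e2: "matrix_inv u ** u = mat 1" using inv_props[of u] du by auto
  have "mat c ** h ** u = (u ** h ** matrix_inv u ** matrix_inv h) ** h ** u"
    using k by (simp only: c_def)
  also have "\<dots> = u ** h ** matrix_inv u ** (matrix_inv h ** h) ** u"
    by (simp only: matrix_mul_assoc)
  also have "\<dots> = u ** h ** matrix_inv u ** u"
    by (simp only: e1 matrix_mul_rid)
  also have "\<dots> = u ** h ** (matrix_inv u ** u)"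
    by (simp only: matrix_mul_assoc)
  also have "\<dots> = u ** h" by (simp only: e2 matrix_mul_rid)
  finally have eq1: "u ** h = mat c ** h ** u" by (rule sym)
  have c1: "c \<noteq> 1"
  proof
    assume "c = 1"
    then have "u ** h = h ** u" using eq1 by (simp only: matrix_mul_lid)
    with h(2) show False by blast
  qed
  have "u = u ** (h ** matrix_inv h)" by (simp only: e1 matrix_mul_rid)
  also have "\<dots> = (u ** h) ** matrix_inv h" by (simp only: matrix_mul_assoc)
  also have "\<dots> = mat c ** (h ** u ** matrix_inv h)" unfolding eq1 by (simp only: matrix_mul_assoc)
  finally have "trace u = trace (mat c ** (h ** (u ** matrix_inv h)))" by (simp only: matrix_mul_assoc)
  also have "\<dots> = c * trace (h ** (u ** matrix_inv h))" by (rule trace_mat_mul)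
  also have "trace (h ** (u ** matrix_inv h)) = trace (u ** matrix_inv h ** h)"
    by (rule trace_mul_sym)
  also have "u ** matrix_inv h ** h = u ** (matrix_inv h ** h)" by (simp only: matrix_mul_assoc)
  also have "\<dots> = u" by (simp only: e1 matrix_mul_rid)
  finally have "(1 - c) * trace u = 0" by (simp add: algebra_simps)
  with c1 show "trace u = 0" by simp
qed
end
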